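(* For any $n\ge 1$, every longest saturated chain from $0^n$ to $12^{n-1}$ in $(\mathsf{Tr}(n),\preccurlyeq)$ has length $2n-1$. Moreover, a triword $u\in\mathsf{Tr}(n)$ belongs to such a longest saturated chain if and only if, whenever $u_i=0$, one has $u_j=0$ for all $j\ge i$.
   Context: A triword of size $n$ is a word $u=u_1\cdots u_n$ with $u_i\in\{0,1,2\}$, $u_1\ne 2$, and such that $u_i=0$ implies $u_j\neq 1$ for all $j>i$; $\mathsf{Tr}(n)$ is their set, ordered componentwise ($u\preccurlyeq v$ iff $u_i\le v_i$ for all $i$); its minimum is $0^n$ and its maximum is $12^{n-1}$. A saturated chain $x_1\lessdot\cdots\lessdot x_r$ (successive covering relations) has length $r-1$. *)

theory Defs
  imports Main
begin

text \<open>Triwords of size n, as lists of length n (0-based indices).\<close>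
definition triword :: "nat \<Rightarrow> nat list \<Rightarrow> bool" where
  "triword n u \<longleftrightarrow> length u = n \<and> set u \<subseteq> {0,1,2} \<and> (n \<ge> 1 \<longrightarrow> u!0 \<noteq> 2) \<and>
     (\<forall>i j. i < j \<and> j < n \<and> u!i = 0 \<longrightarrow> u!j \<noteq> 1)"

definition Tr :: "nat \<Rightarrow> nat list set" where
  "Tr n = {u. triword n u}"

definition tr_le :: "nat list \<Rightarrow> nat list \<Rightarrow> bool" where
  "tr_le u v \<longleftrightarrow> list_all2 (\<le>) u v"

definition tr_covers :: "nat \<Rightarrow> nat list \<Rightarrow> nat list \<Rightarrow> bool" where
  "tr_covers n u v \<longleftrightarrow> u \<in> Tr n \<and> v \<in> Tr n \<and> tr_le u v \<and> u \<noteq> v \<and>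
     \<not> (\<exists>w \<in> Tr n. tr_le u w \<and> tr_le w v \<and> w \<noteq> u \<and> w \<noteq> v)"

definition sat_chain :: "nat \<Rightarrow> nat list list \<Rightarrow> bool" where
  "sat_chain n xs \<longleftrightarrow> xs \<noteq> [] \<and> set xs \<subseteq> Tr n \<and>
     (\<forall>i. i + 1 < length xs \<longrightarrow> tr_covers n (xs!i) (xs!(i+1)))"

definition chain_length :: "nat list list \<Rightarrow> nat" where
  "chain_length xs = length xs - 1"

definition tr_bot :: "nat \<Rightarrow> nat list" where
  "tr_bot n = replicate n 0"

definition tr_top :: "nat \<Rightarrow> nat list" where
  "tr_top n = 1 # replicate (n - 1) 2"

definition sat_chain_bot_top :: "nat \<Rightarrow> nat list list \<Rightarrow> bool" where
  "sat_chain_bot_top n xs \<longleftrightarrow> sat_chain n xs \<and> hd xs = tr_bot n \<and> last xs = tr_top n"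

definition longest_sat_chain :: "nat \<Rightarrow> nat list list \<Rightarrow> bool" where
  "longest_sat_chain n xs \<longleftrightarrow> sat_chain_bot_top n xs \<and>
     (\<forall>ys. sat_chain_bot_top n ys \<longrightarrow> chain_length ys \<le> chain_length xs)"

end

theory Submission
  imports Defs
begin

abbreviation S :: "nat list \<Rightarrow> nat" where "S \<equiv> sum_list"

definition Zs :: "nat \<Rightarrow> nat list \<Rightarrow> bool" where
  "Zs n u \<longleftrightarrow> (\<forall>i < n. u!i = 0 \<longrightarrow> (\<forall>j. i \<le> j \<and> j < n \<longrightarrow> u!j = 0))"

definition stp :: "nat \<Rightarrow> nat list \<Rightarrow> nat list \<Rightarrow> bool" where
  "stp n u v \<longleftrightarrow> u \<in> Tr n \<and> v \<in> Tr n \<and> (\<exists>i<n. v = u[i := Suc (u!i)])"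

lemma le_sum: "list_all2 (\<le>) a b \<Longrightarrow> S a \<le> S b"
  by (induction rule: list_all2_induct) auto

lemma le_sum_strict: "list_all2 (\<le>) a b \<Longrightarrow> a \<noteq> b \<Longrightarrow> S a < S b"
proof (induction rule: list_all2_induct)
  case Nil then show ?case by simp
next
  case (Cons x xs y ys)
  then show ?case using le_sum[OF Cons(2)] by (cases "x = y") auto
qed

lemma le_coord: "list_all2 (\<le>) a b \<Longrightarrow> j < length a \<Longrightarrow> S a + b!j \<le> S b + a!j"
proof (induction arbitrary: j rule: list_all2_induct)
  case Nil then show ?case by simp
next
  case (Cons x xs y ys)
  show ?case
  proof (cases j)
    case 0 then show ?thesis using Cons le_sum[OF Cons(2)] by simp
  next
    case (Suc k) then show ?thesis using Cons.IH[of k] Cons.hyps Cons.prems by simp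
  qed
qed

lemma le_trans_l: "tr_le a b \<Longrightarrow> tr_le b c \<Longrightarrow> tr_le a c"
  unfolding tr_le_def list_all2_conv_all_nth by (metis le_trans)

lemma sum_upd: "i < length u \<Longrightarrow> S (u[i := Suc (u!i)]) = Suc (S u)"
  by (induction u arbitrary: i) (auto split: nat.splits)

lemma Tr_len: "u \<in> Tr n \<Longrightarrow> length u = n"
  by (simp add: Tr_def triword_def)

lemma stp_covers: assumes "stp n u v" shows "tr_covers n u v"
proof -
  obtain i where i: "i < n" "v = u[i := Suc (u!i)]" and T: "u \<in> Tr n" "v \<in> Tr n"
    using assms unfolding stp_def by blast
  have len: "length u = n" using T Tr_len by blast
  have le: "tr_le u v" unfolding tr_le_def list_all2_conv_all_nth using i len
    by (auto simp: nth_list_update)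
  have ne: "u \<noteq> v" using i len by (metis n_not_Suc_n nth_list_update_eq)
  have sv: "S v = Suc (S u)" using i len sum_upd by simp
  have "\<not> (\<exists>w \<in> Tr n. tr_le u w \<and> tr_le w v \<and> w \<noteq> u \<and> w \<noteq> v)"
  proof
    assume "\<exists>w \<in> Tr n. tr_le u w \<and> tr_le w v \<and> w \<noteq> u \<and> w \<noteq> v"
    then obtain w where "tr_le u w" "tr_le w v" "w \<noteq> u" "w \<noteq> v" by blast
    then have "S u < S w" "S w < S v" using le_sum_strict[of u w] le_sum_strict[of w v]
      unfolding tr_le_def by auto
    then show False using sv by simp
  qed
  then show ?thesis unfolding tr_covers_def using T le ne by blast
qed

lemma stp_sum: "stp n u v \<Longrightarrow> S v = Suc (S u)"
  unfolding stp_def using sum_upd Tr_len by force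

lemma ext:
  assumes "(stp n)\<^sup>*\<^sup>* u v" "sat_chain n xs" "last xs = u"
  shows "\<exists>ys. sat_chain n ys \<and> hd ys = hd xs \<and> last ys = v \<and> set xs \<subseteq> set ys \<and>
              length ys + S u = length xs + S v"
  using assms(1)
proof (induction rule: rtranclp_induct)
  case base
  then show ?case using assms(2,3) by (intro exI[of _ xs]) auto
next
  case (step y z)
  from step.IH obtain ys where ys: "sat_chain n ys" "hd ys = hd xs" "last ys = y"
    "set xs \<subseteq> set ys" "length ys + S u = length xs + S y" by blast
  have ne: "ys \<noteq> []" using ys(1) unfolding sat_chain_def by blast
  have zT: "z \<in> Tr n" using step.hyps(2) unfolding stp_def by blast
  have cov: "tr_covers n y z" using stp_covers[OF step.hyps(2)] .
  have "sat_chain n (ys @ [z])"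
    unfolding sat_chain_def
  proof (intro conjI allI impI)
    show "ys @ [z] \<noteq> []" by simp
    show "set (ys @ [z]) \<subseteq> Tr n" using ys(1) zT unfolding sat_chain_def by auto
  next
    fix i assume "i + 1 < length (ys @ [z])"
    then consider "i + 1 < length ys" | "i = length ys - 1" by fastforce
    then show "tr_covers n ((ys @ [z]) ! i) ((ys @ [z]) ! (i + 1))"
    proof cases
      case 1 then show ?thesis using ys(1) unfolding sat_chain_def by (simp add: nth_append)
    next
      case 2
      have "(ys @ [z]) ! i = y" using 2 ne ys(3) by (simp add: nth_append last_conv_nth)
      moreover have "(ys @ [z]) ! (i+1) = z" using 2 ne by (simp add: nth_append)
      ultimately show ?thesis using cov by simp
    qed
  qed
  then show ?case using ys ne stp_sum[OF step.hyps(2)]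
    by (intro exI[of _ "ys @ [z]"]) auto
qed

lemma Tr_facts:
  assumes "u \<in> Tr n"
  shows "length u = n" "\<And>i. i < n \<Longrightarrow> u!i \<le> 2" "n \<ge> 1 \<Longrightarrow> u!0 \<noteq> 2"
    "\<And>a b. a < b \<Longrightarrow> b < n \<Longrightarrow> u!a = 0 \<Longrightarrow> u!b \<noteq> 1"
proof -
  show "length u = n" using assms by (simp add: Tr_def triword_def)
  show "\<And>i. i < n \<Longrightarrow> u!i \<le> 2"
  proof -
    fix i assume "i < n"
    then have "u!i \<in> set u" using assms by (simp add: Tr_def triword_def)
    then have "u!i \<in> {0,1,2}" using assms by (auto simp: Tr_def triword_def)
    then show "u!i \<le> 2" by auto
  qed
  show "n \<ge> 1 \<Longrightarrow> u!0 \<noteq> 2" using assms by (simp add: Tr_def triword_def)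
  show "\<And>a b. a < b \<Longrightarrow> b < n \<Longrightarrow> u!a = 0 \<Longrightarrow> u!b \<noteq> 1" using assms
    by (simp add: Tr_def triword_def)
qed

lemma Tr_intro:
  assumes "length u = n" "\<And>i. i < n \<Longrightarrow> u!i \<le> 2" "n \<ge> 1 \<Longrightarrow> u!0 \<noteq> 2"
    "\<And>a b. a < b \<Longrightarrow> b < n \<Longrightarrow> u!a = 0 \<Longrightarrow> u!b \<noteq> 1"
  shows "u \<in> Tr n"
proof -
  have "set u \<subseteq> {0,1,2}"
  proof
    fix x assume "x \<in> set u"
    then obtain i where "i < n" "u!i = x" using assms(1) by (auto simp: in_set_conv_nth)
    then have "x \<le> 2" using assms(2) by auto
    then show "x \<in> {0,1,2}" by auto
  qed
  then show ?thesis using assms unfolding Tr_def triword_def by auto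
qed

lemma Z_prefix: assumes "length u = n" "Zs n u" shows "\<exists>p\<le>n. \<forall>i<n. (u!i = 0 \<longleftrightarrow> p \<le> i)"
proof (cases "\<exists>i<n. u!i = 0")
  case True
  define p where "p = (LEAST i. i < n \<and> u!i = 0)"
  have p: "p < n" "u!p = 0" using LeastI_ex[OF True] unfolding p_def by auto
  show ?thesis
  proof (intro exI[of _ p] conjI allI impI)
    show "p \<le> n" using p by simp
    fix i assume "i < n"
    show "u!i = 0 \<longleftrightarrow> p \<le> i"
    proof
      assume "u!i = 0" then show "p \<le> i" unfolding p_def using \<open>i < n\<close> by (simp add: Least_le)
    next
      assume "p \<le> i" then show "u!i = 0" using assms(2) p \<open>i < n\<close> unfolding Zs_def by blast
    qed
  qed
next
  case False
  then show ?thesis by (intro exI[of _ n]) auto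
qed

lemma pred:
  assumes T: "u \<in> Tr n" and Z: "Zs n u" and nb: "u \<noteq> tr_bot n"
  shows "\<exists>u'. u' \<in> Tr n \<and> Zs n u' \<and> stp n u' u"
proof -
  note F = Tr_facts[OF T]
  obtain p where p: "p \<le> n" "\<And>i. i < n \<Longrightarrow> (u!i = 0 \<longleftrightarrow> p \<le> i)"
    using Z_prefix[OF F(1) Z] by blast
  show ?thesis
  proof (cases "\<exists>i<n. u!i = 2")
    case True
    then obtain i where i: "i < n" "u!i = 2" by blast
    have ip: "i < p" using p(2)[OF i(1)] i(2) by auto
    define u' where "u' = u[i := 1]"
    have u'n: "\<And>k. k < n \<Longrightarrow> u'!k = (if k = i then 1 else u!k)"
      unfolding u'_def using F(1) by (auto simp: nth_list_update)
    have "u' \<in> Tr n"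
    proof (rule Tr_intro)
      show "length u' = n" using F(1) u'_def by simp
      show "\<And>k. k < n \<Longrightarrow> u'!k \<le> 2" using u'n F(2) by auto
      show "n \<ge> 1 \<Longrightarrow> u'!0 \<noteq> 2" using u'n F(3) by auto
      show "\<And>a b. a < b \<Longrightarrow> b < n \<Longrightarrow> u'!a = 0 \<Longrightarrow> u'!b \<noteq> 1"
      proof -
        fix a b assume ab: "a < b" "b < n" "u'!a = 0"
        then have "a \<noteq> i" "u!a = 0" using u'n by (auto split: if_splits)
        then have "p \<le> a" using p(2) ab by auto
        then show "u'!b \<noteq> 1" using ab ip u'n[of b] p(2)[of b] by auto
      qed
    qed
    moreover have "Zs n u'" unfolding Zs_def
    proof (intro allI impI)
      fix a j assume a: "a < n" "u'!a = 0" and j: "a \<le> j \<and> j < n"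
      then have "a \<noteq> i" "u!a = 0" using u'n by (auto split: if_splits)
      then have "p \<le> a" using p(2) a by auto
      then show "u'!j = 0" using j ip u'n[of j] p(2)[of j] by auto
    qed
    moreover have uu: "u[i := Suc (Suc 0)] = u" using i(2) by (metis list_update_id numeral_2_eq_2)
    moreover have "stp n u' u" unfolding stp_def
      using T \<open>u' \<in> Tr n\<close> i u'n[OF i(1)] uu by (intro conjI exI[of _ i]) (auto simp: u'_def)
    ultimately show ?thesis by blast
  next
    case False
    have p0: "p > 0"
    proof (rule ccontr)
      assume "\<not> p > 0"
      then have "\<forall>i<n. u!i = 0" using p(2) by auto
      then have "u = tr_bot n" unfolding tr_bot_def using F(1) by (intro nth_equalityI) auto
      then show False using nb by simp
    qed
    define m where "m = p - 1"
    have mn: "m < n" using p p0 unfolding m_def by auto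
    have um0: "u!m \<noteq> 0" "u!m \<noteq> 2" "u!m \<le> 2" using p(2)[OF mn] F(2)[OF mn] False mn p0
      unfolding m_def by auto
    then have um: "u!m = 1" by auto
    define u' where "u' = u[m := 0]"
    have u'n: "\<And>k. k < n \<Longrightarrow> u'!k = (if k = m then 0 else u!k)"
      unfolding u'_def using F(1) by (auto simp: nth_list_update)
    have z: "\<And>k. k < n \<Longrightarrow> (u'!k = 0 \<longleftrightarrow> m \<le> k)" using u'n p(2) p0 unfolding m_def by auto
    have "u' \<in> Tr n"
    proof (rule Tr_intro)
      show "length u' = n" using F(1) u'_def by simp
      show "\<And>k. k < n \<Longrightarrow> u'!k \<le> 2" using u'n F(2) by auto
      show "n \<ge> 1 \<Longrightarrow> u'!0 \<noteq> 2" using u'n False by auto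
      show "\<And>a b. a < b \<Longrightarrow> b < n \<Longrightarrow> u'!a = 0 \<Longrightarrow> u'!b \<noteq> 1"
        using z by (metis less_imp_le_nat order.trans zero_neq_one less_trans)
    qed
    moreover have "Zs n u'" unfolding Zs_def using z by (meson order.trans)
    moreover have "m < n" using p p0 unfolding m_def by auto
    moreover have "stp n u' u" unfolding stp_def
      using T \<open>u' \<in> Tr n\<close> \<open>m < n\<close> u'n um list_update_id[of u m]
      by (intro conjI exI[of _ m]) (auto simp: u'_def)
    ultimately show ?thesis by blast
  qed
qed

lemma top_nth: "i < n \<Longrightarrow> tr_top n ! i = (if i = 0 then 1 else 2)"
  unfolding tr_top_def by (auto simp: nth_Cons' nth_replicate)

lemma succ:
  assumes T: "u \<in> Tr n" and Z: "Zs n u" and nt: "u \<noteq> tr_top n" and n1: "n \<ge> 1"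
  shows "\<exists>u'. u' \<in> Tr n \<and> Zs n u' \<and> stp n u u'"
proof -
  note F = Tr_facts[OF T]
  obtain p where p: "p \<le> n" "\<And>i. i < n \<Longrightarrow> (u!i = 0 \<longleftrightarrow> p \<le> i)"
    using Z_prefix[OF F(1) Z] by blast
  show ?thesis
  proof (cases "p < n")
    case True
    define u' where "u' = u[p := 1]"
    have u'n: "\<And>k. k < n \<Longrightarrow> u'!k = (if k = p then 1 else u!k)"
      unfolding u'_def using F(1) by (auto simp: nth_list_update)
    have z: "\<And>k. k < n \<Longrightarrow> (u'!k = 0 \<longleftrightarrow> p < k)" using u'n p(2) by auto
    have "u' \<in> Tr n"
    proof (rule Tr_intro)
      show "length u' = n" using F(1) u'_def by simp
      show "\<And>k. k < n \<Longrightarrow> u'!k \<le> 2" using u'n F(2) by auto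
      show "n \<ge> 1 \<Longrightarrow> u'!0 \<noteq> 2" using u'n F(3) by auto
      show "\<And>a b. a < b \<Longrightarrow> b < n \<Longrightarrow> u'!a = 0 \<Longrightarrow> u'!b \<noteq> 1"
        using z by (metis less_trans zero_neq_one)
    qed
    moreover have "Zs n u'" unfolding Zs_def using z by (meson order.strict_trans2)
    moreover have "stp n u u'" unfolding stp_def
      using T \<open>u' \<in> Tr n\<close> True p(2)[of p]
      by (intro conjI exI[of _ p]) (auto simp: u'_def)
    ultimately show ?thesis by blast
  next
    case False
    then have nz: "\<And>i. i < n \<Longrightarrow> u!i \<noteq> 0" using p by auto
    have lt: "length (tr_top n) = n" using n1 unfolding tr_top_def by simp
    obtain i where i: "i < n" "u!i \<noteq> tr_top n ! i"
      using nt F(1) lt nth_equalityI by metis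
    have u0: "u!0 = 1" using nz[of 0] F(2)[of 0] F(3) n1 by auto
    have i0: "i \<noteq> 0" using i u0 top_nth[OF i(1)] by (cases "i = 0") auto
    have ui: "u!i = 1" using i i0 top_nth[OF i(1)] nz[of i] F(2)[of i] by auto
    define u' where "u' = u[i := 2]"
    have u'n: "\<And>k. k < n \<Longrightarrow> u'!k = (if k = i then 2 else u!k)"
      unfolding u'_def using F(1) by (auto simp: nth_list_update)
    have "u' \<in> Tr n"
    proof (rule Tr_intro)
      show "length u' = n" using F(1) u'_def by simp
      show "\<And>k. k < n \<Longrightarrow> u'!k \<le> 2" using u'n F(2) by auto
      show "n \<ge> 1 \<Longrightarrow> u'!0 \<noteq> 2" using u'n F(3) i0 by auto
      show "\<And>a b. a < b \<Longrightarrow> b < n \<Longrightarrow> u'!a = 0 \<Longrightarrow> u'!b \<noteq> 1"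
        using u'n nz by (metis less_trans zero_neq_numeral)
    qed
    moreover have "Zs n u'" unfolding Zs_def using u'n nz by (metis zero_neq_numeral)
    moreover have "stp n u u'" unfolding stp_def
      using T \<open>u' \<in> Tr n\<close> i ui
      by (intro conjI exI[of _ i]) (auto simp: u'_def numeral_2_eq_2)
    ultimately show ?thesis by blast
  qed
qed

lemma sum_bound: "set u \<subseteq> {0,1,2} \<Longrightarrow> S u \<le> 2 * length u"
  by (induction u) auto

lemma down: "u \<in> Tr n \<Longrightarrow> Zs n u \<Longrightarrow> (stp n)\<^sup>*\<^sup>* (tr_bot n) u"
proof (induction "S u" arbitrary: u rule: less_induct)
  case less
  show ?case
  proof (cases "u = tr_bot n")
    case True then show ?thesis by simp
  next
    case False
    then obtain u' where u': "u' \<in> Tr n" "Zs n u'" "stp n u' u" using pred less.prems by blast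
    have "S u' < S u" using stp_sum[OF u'(3)] by simp
    then have "(stp n)\<^sup>*\<^sup>* (tr_bot n) u'" using less.hyps u' by blast
    then show ?thesis using u'(3) by (rule rtranclp.rtrancl_into_rtrancl)
  qed
qed

lemma up: "u \<in> Tr n \<Longrightarrow> Zs n u \<Longrightarrow> n \<ge> 1 \<Longrightarrow> (stp n)\<^sup>*\<^sup>* u (tr_top n)"
proof (induction "2 * n - S u" arbitrary: u rule: less_induct)
  case less
  show ?case
  proof (cases "u = tr_top n")
    case True then show ?thesis by simp
  next
    case False
    then obtain u' where u': "u' \<in> Tr n" "Zs n u'" "stp n u u'" using succ less.prems by blast
    have "S u' \<le> 2 * n" using sum_bound[of u'] u'(1) unfolding Tr_def triword_def by auto
    then have "2 * n - S u' < 2 * n - S u" using stp_sum[OF u'(3)] by simp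
    then have "(stp n)\<^sup>*\<^sup>* u' (tr_top n)" using less.hyps u' less.prems by blast
    then show ?thesis using converse_rtranclp_into_rtranclp[of "stp n" u u' "tr_top n"] u'(3) by blast
  qed
qed

lemma chain_mono:
  assumes "sat_chain n xs"
  shows "a \<le> b \<Longrightarrow> b < length xs \<Longrightarrow> tr_le (xs!a) (xs!b) \<and> S (xs!a) + (b - a) \<le> S (xs!b)"
proof (induction b)
  case 0
  then show ?case by (simp add: tr_le_def list_all2_refl)
next
  case (Suc b)
  show ?case
  proof (cases "a = Suc b")
    case True then show ?thesis by (simp add: tr_le_def list_all2_refl)
  next
    case False
    then have IH: "tr_le (xs!a) (xs!b) \<and> S (xs!a) + (b - a) \<le> S (xs!b)" using Suc by auto
    have c: "tr_covers n (xs!b) (xs!Suc b)" using assms Suc.prems unfolding sat_chain_def by auto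
    then have "tr_le (xs!b) (xs!Suc b)" "xs!b \<noteq> xs!Suc b" unfolding tr_covers_def by auto
    then have "S (xs!b) < S (xs!Suc b)" using le_sum_strict unfolding tr_le_def by blast
    then show ?thesis using IH le_trans_l \<open>tr_le (xs!b) (xs!Suc b)\<close> False Suc.prems by auto
  qed
qed

lemma ivt: "f 0 = (0::nat) \<Longrightarrow> (\<forall>m<k. f (Suc m) \<le> Suc (f m)) \<Longrightarrow> 1 \<le> f k \<Longrightarrow> \<exists>m\<le>k. f m = 1"
proof (induction k)
  case 0 then show ?case by simp
next
  case (Suc k)
  show ?case
  proof (cases "1 \<le> f k")
    case True
    have "\<forall>m<k. f (Suc m) \<le> Suc (f m)" using Suc.prems(2) by simp
    then obtain m where "m \<le> k" "f m = 1" using Suc.IH Suc.prems(1) True by blast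
    then show ?thesis by (intro exI[of _ m]) simp
  next
    case False
    then have "f k = 0" by simp
    moreover have "f (Suc k) \<le> Suc (f k)" using Suc.prems(2) by simp
    ultimately have "f (Suc k) = 1" using Suc.prems(3) by simp
    then show ?thesis by blast
  qed
qed

theorem lemma3p1:
  fixes n :: nat
  assumes "n \<ge> 1"
  shows "(\<forall>c. longest_sat_chain n c \<longrightarrow> chain_length c = 2 * n - 1) \<and>
         (\<forall>u \<in> Tr n. (\<exists>c. longest_sat_chain n c \<and> u \<in> set c) \<longleftrightarrow>
             (\<forall>i < n. u!i = 0 \<longrightarrow> (\<forall>j. i \<le> j \<and> j < n \<longrightarrow> u!j = 0)))"
proof -
  have Stop: "S (tr_top n) = 2 * n - 1" using assms unfolding tr_top_def
    by (simp add: sum_list_replicate)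
  have Sbot: "S (tr_bot n) = 0" unfolding tr_bot_def by (simp add: sum_list_replicate)
  have botT: "tr_bot n \<in> Tr n"
    by (rule Tr_intro) (auto simp: tr_bot_def)
  have botZ: "Zs n (tr_bot n)" unfolding Zs_def tr_bot_def by simp
  have bound: "chain_length ys \<le> 2 * n - 1" if "sat_chain_bot_top n ys" for ys
  proof -
    have ne: "ys \<noteq> []" using that unfolding sat_chain_bot_top_def sat_chain_def by blast
    have "S (ys!0) + (length ys - 1 - 0) \<le> S (ys!(length ys - 1))"
      using chain_mono[of n ys 0 "length ys - 1"] that ne unfolding sat_chain_bot_top_def by auto
    moreover have "ys!0 = tr_bot n" "ys!(length ys - 1) = tr_top n"
      using that ne unfolding sat_chain_bot_top_def by (auto simp: hd_conv_nth last_conv_nth)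
    ultimately show ?thesis using Stop Sbot unfolding chain_length_def by simp
  qed
  have exist: "\<exists>c. sat_chain_bot_top n c \<and> chain_length c = 2 * n - 1 \<and> u \<in> set c"
    if uTZ: "u \<in> Tr n" "Zs n u" for u
  proof -
    have s0: "sat_chain n [tr_bot n]" unfolding sat_chain_def using botT by simp
    obtain ys1 where ys1: "sat_chain n ys1" "hd ys1 = tr_bot n" "last ys1 = u"
      "length ys1 + S (tr_bot n) = 1 + S u"
      using ext[OF down[OF uTZ] s0] by auto
    obtain ys2 where ys2: "sat_chain n ys2" "hd ys2 = tr_bot n" "last ys2 = tr_top n"
      "set ys1 \<subseteq> set ys2" "length ys2 + S u = length ys1 + S (tr_top n)"
      using ext[OF up[OF uTZ assms] ys1(1,3)] ys1(2) by auto
    have "u \<in> set ys1" using ys1(1,3) unfolding sat_chain_def by auto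
    then show ?thesis using ys2 ys1(4) Sbot Stop assms unfolding sat_chain_bot_top_def chain_length_def
      by (intro exI[of _ ys2]) auto
  qed
  have part1: "chain_length c = 2 * n - 1" if "longest_sat_chain n c" for c
  proof -
    obtain d where "sat_chain_bot_top n d" "chain_length d = 2 * n - 1" using exist[OF botT botZ] by blast
    moreover have "sat_chain_bot_top n c" "chain_length d \<le> chain_length c"
      using that calculation(1) unfolding longest_sat_chain_def by auto
    ultimately show ?thesis using bound[of c] by linarith
  qed
  have part2: "(\<exists>c. longest_sat_chain n c \<and> u \<in> set c) \<longleftrightarrow> Zs n u" if uT: "u \<in> Tr n" for u
  proof
    assume "Zs n u"
    then obtain c where c: "sat_chain_bot_top n c" "chain_length c = 2 * n - 1" "u \<in> set c"
      using exist uT by blast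
    have "longest_sat_chain n c" unfolding longest_sat_chain_def
      using bound c(1,2) by simp
    then show "\<exists>c. longest_sat_chain n c \<and> u \<in> set c" using c(3) by blast
  next
    assume "\<exists>c. longest_sat_chain n c \<and> u \<in> set c"
    then obtain c where c: "longest_sat_chain n c" "u \<in> set c" by blast
    have cl: "chain_length c = 2 * n - 1" using part1 c(1) .
    have sc: "sat_chain n c" "hd c = tr_bot n" "last c = tr_top n"
      using c(1) unfolding longest_sat_chain_def sat_chain_bot_top_def by auto
    have ne: "c \<noteq> []" using sc unfolding sat_chain_def by blast
    have lc: "length c = 2 * n" using cl ne assms unfolding chain_length_def by auto
    have c0: "c!0 = tr_bot n" "c!(length c - 1) = tr_top n"
      using sc ne by (auto simp: hd_conv_nth last_conv_nth)
    have cT: "\<And>m. m < length c \<Longrightarrow> c!m \<in> Tr n" using sc(1) unfolding sat_chain_def by auto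
    have Sm: "S (c!m) = m" if "m < length c" for m
    proof -
      have "S (c!0) + (m - 0) \<le> S (c!m)" using chain_mono[OF sc(1), of 0 m] that by auto
      moreover have "S (c!m) + (length c - 1 - m) \<le> S (c!(length c - 1))"
        using chain_mono[OF sc(1), of m "length c - 1"] that by auto
      moreover have "S (c!0) = 0" "S (c!(length c - 1)) = length c - 1" using c0 Sbot Stop lc by auto
      ultimately show ?thesis using that by linarith
    qed
    obtain k where k: "k < length c" "c!k = u" using c(2) by (auto simp: in_set_conv_nth)
    show "Zs n u" unfolding Zs_def
    proof (intro allI impI)
      fix i j assume i: "i < n" "u!i = 0" and j: "i \<le> j \<and> j < n"
      show "u!j = 0"
      proof (rule ccontr)
        assume nz: "u!j \<noteq> 0"
        note F = Tr_facts[OF uT]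
        have "i \<noteq> j" using i(2) nz by auto
        then have ij: "i < j" using j by simp
        have "u!j \<le> 2" "u!j \<noteq> 1" using F(2)[of j] F(4)[of i j] ij i(2) j by auto
        then have uj: "u!j = 2" using nz by linarith
        define f where "f m = (c!m)!j" for m
        have f0: "f 0 = 0" using c0 j unfolding f_def tr_bot_def by simp
        have fk: "1 \<le> f k" using k uj unfolding f_def by simp
        have fs: "\<forall>m<k. f (Suc m) \<le> Suc (f m)"
        proof (intro allI impI)
          fix m assume "m < k"
          have mk: "Suc m < length c" using \<open>m < k\<close> k(1) by simp
          then have le: "tr_le (c!m) (c!Suc m)" using chain_mono[OF sc(1), of m "Suc m"] by simp
          have "c!m \<in> Tr n" using cT[of m] mk by simp
          then have "j < length (c!m)" using j Tr_len[of "c!m" n] by simp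
          then have "S (c!m) + f (Suc m) \<le> S (c!Suc m) + f m"
            using le_coord[of "c!m" "c!Suc m" j] le unfolding tr_le_def f_def by blast
          moreover have "S (c!m) = m" "S (c!Suc m) = Suc m" using Sm[of m] Sm[of "Suc m"] mk by auto
          ultimately show "f (Suc m) \<le> Suc (f m)" by simp
        qed
        obtain m where m: "m \<le> k" "f m = 1" using ivt[OF f0 fs fk] by blast
        have "tr_le (c!m) (c!k)" using chain_mono[OF sc(1) m(1) k(1)] by blast
        then have le: "tr_le (c!m) u" using k(2) by simp
        have "m < length c" using m(1) k(1) by linarith
        then have cmT: "c!m \<in> Tr n" using cT by blast
        then have "i < length (c!m)" using i Tr_len[OF cmT] by simp
        then have "(c!m)!i \<le> u!i" using list_all2_nthD[of "(\<le>)" "c!m" u i] le unfolding tr_le_def by blast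
        then have ci0: "(c!m)!i = 0" using i(2) by linarith
        have cj1: "(c!m)!j = 1" using m(2) unfolding f_def by blast
        have jn: "j < n" using j by blast
        have "(c!m)!j \<noteq> 1" by (rule Tr_facts(4)[OF cmT ij jn ci0])
        then show False using cj1 by blast
      qed
    qed
  qed
  have A: "\<forall>c. longest_sat_chain n c \<longrightarrow> chain_length c = 2 * n - 1" using part1 by blast
  have B: "\<forall>u \<in> Tr n. (\<exists>c. longest_sat_chain n c \<and> u \<in> set c) \<longleftrightarrow> Zs n u"
    using part2 by blast
  show ?thesis using conjI[OF A B] unfolding Zs_def .
qed

end
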